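(* Let $\mathcal G$ be a groupoid (standing conventions) admitting a Følner sequence $\mathcal S=(S_n)_{n\in\mathbb N}$, and let $A\subseteq\mathcal G^{(0)}$ be compact open. Then there exists $\nu\in M(\mathcal G)$ such that $\bar D^+_{\mathcal S}(A)=\nu(A)$; in particular $\bar D^+_{\mathcal S}(A)\le\sup_{\mu\in M(\mathcal G)}\mu(A)$.
   Context: Standing conventions: a groupoid is a $\sigma$-compact, locally compact, Hausdorff, étale, ample groupoid $\mathcal G$ with compact unit space $\mathcal G^{(0)}$. For $A,B\subseteq\mathcal G$, $AB$ denotes composable products and $Au=\{a\in A:s(a)=u\}$. A multisection is a finite family $\{C_{i,j}:i,j\in F\}$ of bisections with $C_{i,j}C_{j,k}=C_{i,k}$ and pairwise disjoint levels $C_{i,i}\subseteq\mathcal G^{(0)}$. A normal set is a compact open $S\subseteq\mathcal G$ together with compact open multisections $\{C^l_{i,j}:i,j\in F_l\}$, $l=1,\dots,m$, and indices $i_l\in F_l$ with $S=\bigcup_{l=1}^m\bigsqcup_{i\in F_l}C^l_{i,i_l}$ and $\mathcal G^{(0)}=\bigsqcup_{l=1}^mC^l_{i_l,i_l}$ (so $r$ is injective on each $Su$). A Følner sequence is a sequence $(S_n)$ of normal sets such that for every compact $K$, $\sup_{u\in\mathcal G^{(0)}}|KS_nu\setminus S_nu|/|S_nu|\to0$. $M(\mathcal G)$ is the set of $\mathcal G$-invariant Borel probability measures on $\mathcal G^{(0)}$. For $A\subseteq\mathcal G^{(0)}$, $\bar D^+_{\mathcal S}(A)=\limsup_{n\to\infty}\sup_{u\in\mathcal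 G^{(0)}}\frac{1}{|S_nu|}\sum_{\gamma\in S_nu}1_A(r(\gamma))$. *)

theory Defs
  imports "HOL-Analysis.Analysis" "HOL-Probability.Probability"
begin

text \<open>A topological groupoid is modelled on a whole type 'g (its arrow space), with
  range map r, source map s, (partial) multiplication mul (meaningful when s a = r b),
  inversion iv and unit space U.\<close>

definition groupoid_axioms ::
  "('g \<Rightarrow> 'g) \<Rightarrow> ('g \<Rightarrow> 'g) \<Rightarrow> ('g \<Rightarrow> 'g \<Rightarrow> 'g) \<Rightarrow> ('g \<Rightarrow> 'g) \<Rightarrow> 'g set \<Rightarrow> bool" where
  "groupoid_axioms r s mul iv U \<longleftrightarrow>
     (\<forall>g. r g \<in> U \<and> s g \<in> U) \<and>
     (\<forall>u\<in>U. r u = u \<and> s u = u) \<and>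
     (\<forall>a b. s a = r b \<longrightarrow> r (mul a b) = r a \<and> s (mul a b) = s b) \<and>
     (\<forall>a b c. s a = r b \<and> s b = r c \<longrightarrow> mul (mul a b) c = mul a (mul b c)) \<and>
     (\<forall>g. mul (r g) g = g \<and> mul g (s g) = g) \<and>
     (\<forall>g. r (iv g) = s g \<and> s (iv g) = r g) \<and>
     (\<forall>g. mul g (iv g) = r g \<and> mul (iv g) g = s g)"

definition bisection :: "('g \<Rightarrow> 'g) \<Rightarrow> ('g \<Rightarrow> 'g) \<Rightarrow> 'g set \<Rightarrow> bool" where
  "bisection r s B \<longleftrightarrow> inj_on r B \<and> inj_on s B"

definition local_homeo :: "('g::topological_space \<Rightarrow> 'g) \<Rightarrow> bool" where
  "local_homeo f \<longleftrightarrow> (\<forall>g. \<exists>V. open V \<and> g \<in> V \<and> open (f ` V) \<and>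
      (\<exists>h. homeomorphism V (f ` V) f h))"

text \<open>Standing conventions: sigma-compact, locally compact, Hausdorff, etale, ample,
  with compact unit space.\<close>
definition ample_groupoid ::
  "('g::t2_space \<Rightarrow> 'g) \<Rightarrow> ('g \<Rightarrow> 'g) \<Rightarrow> ('g \<Rightarrow> 'g \<Rightarrow> 'g) \<Rightarrow> ('g \<Rightarrow> 'g) \<Rightarrow> 'g set \<Rightarrow> bool" where
  "ample_groupoid r s mul iv U \<longleftrightarrow>
     groupoid_axioms r s mul iv U \<and>
     continuous_on UNIV r \<and> continuous_on UNIV s \<and> continuous_on UNIV iv \<and>
     continuous_on {(a, b). s a = r b} (\<lambda>(a, b). mul a b) \<and>
     (\<exists>F::nat \<Rightarrow> 'g set. (\<forall>n. compact (F n)) \<and> (\<Union>n. F n) = UNIV) \<and>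
     locally_compact_space (euclidean :: 'g topology) \<and>
     local_homeo r \<and> local_homeo s \<and>
     (\<forall>W g. open W \<and> g \<in> W \<longrightarrow>
        (\<exists>B. compact B \<and> open B \<and> bisection r s B \<and> g \<in> B \<and> B \<subseteq> W)) \<and>
     compact U"

definition setmul :: "('g \<Rightarrow> 'g) \<Rightarrow> ('g \<Rightarrow> 'g) \<Rightarrow> ('g \<Rightarrow> 'g \<Rightarrow> 'g) \<Rightarrow> 'g set \<Rightarrow> 'g set \<Rightarrow> 'g set" where
  "setmul r s mul A B = {mul a b | a b. a \<in> A \<and> b \<in> B \<and> s a = r b}"

definition fibre :: "('g \<Rightarrow> 'g) \<Rightarrow> 'g set \<Rightarrow> 'g \<Rightarrow> 'g set" where
  "fibre s A u = {a \<in> A. s a = u}"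

definition compact_open_multisection ::
  "('g::topological_space \<Rightarrow> 'g) \<Rightarrow> ('g \<Rightarrow> 'g) \<Rightarrow> ('g \<Rightarrow> 'g \<Rightarrow> 'g) \<Rightarrow> 'g set \<Rightarrow>
   nat set \<Rightarrow> (nat \<Rightarrow> nat \<Rightarrow> 'g set) \<Rightarrow> bool" where
  "compact_open_multisection r s mul U F C \<longleftrightarrow>
     finite F \<and>
     (\<forall>i\<in>F. \<forall>j\<in>F. compact (C i j) \<and> open (C i j) \<and> bisection r s (C i j)) \<and>
     (\<forall>i\<in>F. \<forall>j\<in>F. \<forall>k\<in>F. setmul r s mul (C i j) (C j k) = C i k) \<and>
     (\<forall>i\<in>F. C i i \<subseteq> U) \<and>
     (\<forall>i\<in>F. \<forall>j\<in>F. i \<noteq> j \<longrightarrow> C i i \<inter> C j j = {})"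

definition normal_set ::
  "('g::topological_space \<Rightarrow> 'g) \<Rightarrow> ('g \<Rightarrow> 'g) \<Rightarrow> ('g \<Rightarrow> 'g \<Rightarrow> 'g) \<Rightarrow> 'g set \<Rightarrow> 'g set \<Rightarrow> bool" where
  "normal_set r s mul U S \<longleftrightarrow> compact S \<and> open S \<and>
     (\<exists>(m::nat) (F::nat \<Rightarrow> nat set) (C::nat \<Rightarrow> nat \<Rightarrow> nat \<Rightarrow> 'g set) (i0::nat \<Rightarrow> nat).
        (\<forall>l<m. compact_open_multisection r s mul U (F l) (C l) \<and> i0 l \<in> F l) \<and>
        S = (\<Union>l<m. \<Union>i\<in>F l. C l i (i0 l)) \<and>
        (\<forall>l<m. \<forall>i\<in>F l. \<forall>i'\<in>F l. i \<noteq> i' \<longrightarrow> C l i (i0 l) \<inter> C l i' (i0 l) = {}) \<and>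
        U = (\<Union>l<m. C l (i0 l) (i0 l)) \<and>
        (\<forall>l<m. \<forall>l'<m. l \<noteq> l' \<longrightarrow> C l (i0 l) (i0 l) \<inter> C l' (i0 l') (i0 l') = {}))"

text \<open>Foelner sequence: sup over units of |K S_n u \ S_n u| / |S_n u| tends to 0 for every
  compact K (supremum taken in ereal so it is well defined).\<close>
definition foelner_seq ::
  "('g::topological_space \<Rightarrow> 'g) \<Rightarrow> ('g \<Rightarrow> 'g) \<Rightarrow> ('g \<Rightarrow> 'g \<Rightarrow> 'g) \<Rightarrow> 'g set \<Rightarrow> (nat \<Rightarrow> 'g set) \<Rightarrow> bool" where
  "foelner_seq r s mul U S \<longleftrightarrow> (\<forall>n. normal_set r s mul U (S n)) \<and>
     (\<forall>K. compact K \<longrightarrow>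
        ((\<lambda>n. SUP u\<in>U. ereal (real (card (setmul r s mul K (fibre s (S n) u) - fibre s (S n) u))
                        / real (card (fibre s (S n) u)))) \<longlonglongrightarrow> 0))"

definition invariant_measures ::
  "('g::topological_space \<Rightarrow> 'g) \<Rightarrow> ('g \<Rightarrow> 'g) \<Rightarrow> 'g set \<Rightarrow> 'g measure set" where
  "invariant_measures r s U = {\<nu>. prob_space \<nu> \<and> sets \<nu> = sets (restrict_space borel U) \<and>
     (\<forall>B. open B \<and> bisection r s B \<longrightarrow> emeasure \<nu> (s ` B) = emeasure \<nu> (r ` B))}"

definition upper_density ::
  "('g \<Rightarrow> 'g) \<Rightarrow> ('g \<Rightarrow> 'g) \<Rightarrow> 'g set \<Rightarrow> (nat \<Rightarrow> 'g set) \<Rightarrow> 'g set \<Rightarrow> ereal" where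
  "upper_density r s U S A = limsup (\<lambda>n. SUP u\<in>U.
      ereal ((1 / real (card (fibre s (S n) u))) * (\<Sum>\<gamma>\<in>fibre s (S n) u. indicator A (r \<gamma>))))"

end

theory Submission
  imports Defs
begin



locale ag =
  fixes r s iv :: "'g::t2_space \<Rightarrow> 'g" and mul :: "'g \<Rightarrow> 'g \<Rightarrow> 'g" and U :: "'g set"
  assumes amp: "ample_groupoid r s mul iv U"
begin

lemma ga: "groupoid_axioms r s mul iv U" using amp by (simp add: ample_groupoid_def)

lemma rU[simp]: "r g \<in> U" and sU[simp]: "s g \<in> U"
  using ga by (auto simp: groupoid_axioms_def)
lemma ru: "u \<in> U \<Longrightarrow> r u = u" and su: "u \<in> U \<Longrightarrow> s u = u"
  using ga by (auto simp: groupoid_axioms_def)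
lemma rmul: "s a = r b \<Longrightarrow> r (mul a b) = r a" and smul: "s a = r b \<Longrightarrow> s (mul a b) = s b"
  using ga by (auto simp: groupoid_axioms_def)
lemma assoc: "s a = r b \<Longrightarrow> s b = r c \<Longrightarrow> mul (mul a b) c = mul a (mul b c)"
  using ga unfolding groupoid_axioms_def by blast
lemma lunit: "mul (r g) g = g" and runit: "mul g (s g) = g"
  using ga by (auto simp: groupoid_axioms_def)
lemma riv[simp]: "r (iv g) = s g" and siv[simp]: "s (iv g) = r g"
  using ga by (auto simp: groupoid_axioms_def)
lemma ivmul: "mul g (iv g) = r g" and mulivl: "mul (iv g) g = s g"
  using ga by (auto simp: groupoid_axioms_def)

lemma rr[simp]: "r (r g) = r g" and ss[simp]: "s (s g) = s g" and rs[simp]: "r (s g) = s g" and sr[simp]: "s (r g) = r g"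
  using ru su rU sU by auto

lemma iviv[simp]: "iv (iv g) = g"
proof -
  let ?h = "iv g"
  have "g = mul (r g) g" by (simp add: lunit)
  also have "r g = mul (iv ?h) ?h" by (simp add: mulivl)
  also have "mul (mul (iv ?h) ?h) g = mul (iv ?h) (mul ?h g)" by (rule assoc) simp_all
  also have "mul ?h g = s g" by (simp add: mulivl)
  also have "mul (iv ?h) (s g) = iv ?h" using runit[of "iv ?h"] by simp
  finally show ?thesis by simp
qed

lemma cancel: "s b = r c \<Longrightarrow> mul (iv b) (mul b c) = c"
proof -
  assume h: "s b = r c"
  have "mul (iv b) (mul b c) = mul (mul (iv b) b) c" by (rule assoc[symmetric]) (simp_all add: h)
  also have "\<dots> = c" by (simp add: mulivl h lunit)
  finally show ?thesis .
qed

lemma cont_r: "continuous_on UNIV r" and cont_s: "continuous_on UNIV s"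
  and cont_iv: "continuous_on UNIV iv"
  using amp by (auto simp: ample_groupoid_def)
lemma lh_r: "local_homeo r" and lh_s: "local_homeo s" and cptU: "compact U"
  using amp by (auto simp: ample_groupoid_def)
lemma basis: "open W \<Longrightarrow> g \<in> W \<Longrightarrow> \<exists>B. compact B \<and> open B \<and> bisection r s B \<and> g \<in> B \<and> B \<subseteq> W"
  using amp unfolding ample_groupoid_def by blast

end

lemma local_homeo_open:
  assumes "local_homeo f" "open W" shows "open (f ` W)"
proof -
  have "\<exists>T. open T \<and> f x \<in> T \<and> T \<subseteq> f ` W" if "x \<in> W" for x
  proof -
    obtain V h where V: "open V" "x \<in> V" "open (f ` V)" "homeomorphism V (f ` V) f h"
      using assms(1) unfolding local_homeo_def by blast
    have ch: "continuous_on (f ` V) h" and hf: "\<And>y. y \<in> V \<Longrightarrow> h (f y) = y"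
      and hV: "h ` f ` V = V"
      using V(4) by (auto simp: homeomorphism_def)
    define T where "T = f ` V \<inter> h -` (V \<inter> W)"
    have "\<forall>B. open B \<longrightarrow> open (f ` V \<inter> h -` B)"
      using ch by (simp add: continuous_on_open_vimage[OF V(3)] Int_commute)
    hence "open (f ` V \<inter> h -` (V \<inter> W))" using V(1) assms(2) by (metis open_Int)
    hence "open T" unfolding T_def .
    moreover have "f x \<in> T" using that V hf by (auto simp: T_def)
    moreover have "T \<subseteq> f ` W"
    proof
      fix y assume "y \<in> T"
      then obtain z where "z \<in> V" "y = f z" "h y \<in> W" by (auto simp: T_def)
      then show "y \<in> f ` W" using hf by auto
    qed
    ultimately show ?thesis by blast
  qed
  then show ?thesis by (subst open_subopen) blast
qed

context ag begin

lemma open_r: "open W \<Longrightarrow> open (r ` W)" using local_homeo_open[OF lh_r] .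
lemma open_s: "open W \<Longrightarrow> open (s ` W)" using local_homeo_open[OF lh_s] .

lemma U_range: "U = range r"
proof (rule set_eqI, rule iffI)
  fix x assume "x \<in> U" thus "x \<in> range r" by (metis ru rangeI)
qed auto
lemma openU: "open U" using open_r[of UNIV] U_range by simp

lemma iv_image: "iv ` B = iv -` B"
  by (auto simp: image_iff) (metis iviv)

lemma open_iv: "open B \<Longrightarrow> open (iv ` B)"
  unfolding iv_image using continuous_on_open_vimage[OF open_UNIV] cont_iv by auto

lemma compact_iv: "compact B \<Longrightarrow> compact (iv ` B)"
  by (rule compact_continuous_image) (rule continuous_on_subset[OF cont_iv], simp)

lemma bisection_iv: "bisection r s B \<Longrightarrow> bisection r s (iv ` B)"
  unfolding bisection_def inj_on_def by auto

lemma r_iv_image: "r ` iv ` B = s ` B" and s_iv_image: "s ` iv ` B = r ` B"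
  by (auto simp: image_image)

lemma compact_open_between:
  fixes K :: "'g set"
  assumes K: "compact K" and W0: "open W0" and KO: "K \<subseteq> W0"
  shows "\<exists>C. compact C \<and> open C \<and> K \<subseteq> C \<and> C \<subseteq> W0"
proof -
  have "\<exists>B. compact B \<and> open B \<and> x \<in> B \<and> B \<subseteq> W0" if "x \<in> K" for x
  proof -
    from that KO have "x \<in> W0" by auto
    from basis[OF W0 this] obtain B where "compact B" "open B" "x \<in> B" "B \<subseteq> W0" by auto
    thus ?thesis by auto
  qed
  then obtain B where B: "\<And>x. x \<in> K \<Longrightarrow> compact (B x) \<and> open (B x) \<and> x \<in> B x \<and> B x \<subseteq> W0"
    by metis
  have ob: "\<And>x. x \<in> K \<Longrightarrow> open (B x)" using B by simp
  have cov: "K \<subseteq> (\<Union>x\<in>K. B x)" using B by force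
  obtain D where D: "D \<subseteq> K" "finite D" "K \<subseteq> (\<Union>x\<in>D. B x)"
    using compactE_image[OF K ob cov] by blast
  have "compact (\<Union>x\<in>D. B x)" using D B by (intro compact_UN) auto
  moreover have "open (\<Union>x\<in>D. B x)" using D B by (intro open_UN) auto
  moreover have "(\<Union>x\<in>D. B x) \<subseteq> W0" using D B by force
  ultimately show ?thesis using D by blast
qed

end



definition dens :: "('g \<Rightarrow> 'g) \<Rightarrow> 'g set \<Rightarrow> 'g set \<Rightarrow> real" where
  "dens r F X = 1 / real (card F) * (\<Sum>\<gamma>\<in>F. indicator X (r \<gamma>))"

lemma sum_ind: "finite F \<Longrightarrow> (\<Sum>\<gamma>\<in>F. indicator X (r \<gamma>) :: real) = real (card {\<gamma>\<in>F. r \<gamma> \<in> X})"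
proof -
  assume f: "finite F"
  have "(\<Sum>\<gamma>\<in>F. indicator X (r \<gamma>) :: real) = (\<Sum>\<gamma>\<in>F. if \<gamma> \<in> r -` X then 1 else 0)"
    by (intro sum.cong) (auto simp: indicator_def)
  also have "\<dots> = real (card (F \<inter> r -` X))"
    using sum.inter_restrict[OF f, of "\<lambda>_. 1::real" "r -` X"] by simp
  also have "F \<inter> r -` X = {\<gamma>\<in>F. r \<gamma> \<in> X}" by auto
  finally show ?thesis .
qed

context ag begin

lemma normal_fibre:
  assumes N: "normal_set r s mul U S0" and u: "u \<in> U"
  shows "finite (fibre s S0 u)" "fibre s S0 u \<noteq> {}"
proof -
  obtain m :: nat and F :: "nat \<Rightarrow> nat set" and C :: "nat \<Rightarrow> nat \<Rightarrow> nat \<Rightarrow> 'g set" and i0 :: "nat \<Rightarrow> nat" where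
    H: "\<forall>l<m. compact_open_multisection r s mul U (F l) (C l) \<and> i0 l \<in> F l"
       "S0 = (\<Union>l<m. \<Union>i\<in>F l. C l i (i0 l))"
       "U = (\<Union>l<m. C l (i0 l) (i0 l))"
    using N unfolding normal_set_def by blast
  from u H(3) obtain l where l: "l < m" "u \<in> C l (i0 l) (i0 l)" by auto
  have "u \<in> S0" using H(1,2) l by blast
  moreover have "s u = u" using su u .
  ultimately show "fibre s S0 u \<noteq> {}" by (auto simp: fibre_def)
  have "fibre s S0 u \<subseteq> (\<Union>l<m. \<Union>i\<in>F l. s -` {u} \<inter> C l i (i0 l))"
    using H(2) by (auto simp: fibre_def)
  moreover have "finite (\<Union>l<m. \<Union>i\<in>F l. s -` {u} \<inter> C l i (i0 l))"
  proof (rule finite_UN_I)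
    show "finite {..<m}" by simp
  next
    fix l assume "l \<in> {..<m}"
    then have "compact_open_multisection r s mul U (F l) (C l)" "i0 l \<in> F l" using H(1) by auto
    then have cm: "finite (F l)" "\<forall>i\<in>F l. inj_on s (C l i (i0 l))"
      unfolding compact_open_multisection_def bisection_def by auto
    show "finite (\<Union>i\<in>F l. s -` {u} \<inter> C l i (i0 l))" using cm by (intro finite_UN_I) (auto intro: finite_vimage_IntI)
  qed
  ultimately show "finite (fibre s S0 u)" by (rule finite_subset)
qed

lemma setmul_finite:
  assumes K: "bisection r s K" and F: "finite F"
  shows "finite (setmul r s mul K F)"
proof -
  have "setmul r s mul K F \<subseteq> (\<lambda>(a,b). mul a b) ` (\<Union>b\<in>F. (s -` {r b} \<inter> K) \<times> {b})"
    by (auto simp: setmul_def)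
  moreover have "finite (\<Union>b\<in>F. (s -` {r b} \<inter> K) \<times> {b})"
    using F K by (auto simp: bisection_def intro!: finite_UN_I finite_vimage_IntI)
  ultimately show ?thesis by (meson finite_imageI finite_subset)
qed

lemma count_ineq:
  assumes K: "bisection r s K" and F: "finite F"
  shows "card {\<gamma>\<in>F. r \<gamma> \<in> s ` K} \<le> card {\<eta>\<in>F. r \<eta> \<in> r ` K} + card (setmul r s mul K F - F)"
proof -
  define G where "G = {\<gamma>\<in>F. r \<gamma> \<in> s ` K}"
  define b where "b \<gamma> = (SOME b. b \<in> K \<and> s b = r \<gamma>)" for \<gamma>
  have b: "b \<gamma> \<in> K \<and> s (b \<gamma>) = r \<gamma>" if "\<gamma> \<in> G" for \<gamma>
  proof -
    from that obtain c where "c \<in> K" "s c = r \<gamma>" by (auto simp: G_def)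
    then show ?thesis unfolding b_def by (metis (mono_tags, lifting) someI)
  qed
  define \<phi> where "\<phi> \<gamma> = mul (b \<gamma>) \<gamma>" for \<gamma>
  have inj: "inj_on \<phi> G"
  proof (rule inj_onI)
    fix x y assume xy: "x \<in> G" "y \<in> G" "\<phi> x = \<phi> y"
    have "r (b x) = r (b y)" using xy b[of x] b[of y] rmul unfolding \<phi>_def by metis
    hence "b x = b y" using K b xy unfolding bisection_def inj_on_def by metis
    thus "x = y" using xy(3) cancel b[OF xy(1)] b[OF xy(2)] unfolding \<phi>_def by metis
  qed
  have img: "\<phi> ` G \<subseteq> setmul r s mul K F" using b
    by (auto simp: \<phi>_def setmul_def G_def)
  have imgr: "\<phi> ` G \<inter> F \<subseteq> {\<eta>\<in>F. r \<eta> \<in> r ` K}"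
    using b rmul by (auto simp: \<phi>_def)
  have fin: "finite (setmul r s mul K F)" using setmul_finite[OF K F] .
  have "card G = card (\<phi> ` G)" using inj by (simp add: card_image)
  also have "\<phi> ` G = (\<phi> ` G \<inter> F) \<union> (\<phi> ` G - F)" by auto
  also have "card \<dots> \<le> card (\<phi> ` G \<inter> F) + card (\<phi> ` G - F)" by (rule card_Un_le)
  also have "\<dots> \<le> card {\<eta>\<in>F. r \<eta> \<in> r ` K} + card (setmul r s mul K F - F)"
    using imgr img fin F by (intro add_mono card_mono) auto
  finally show ?thesis unfolding G_def .
qed

lemma dens_card: "finite F \<Longrightarrow> dens r F X = real (card {\<gamma>\<in>F. r \<gamma> \<in> X}) / real (card F)"
  unfolding dens_def by (simp add: sum_ind)

lemma dens_ineq: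
  assumes K: "bisection r s K" and F: "finite F"
  shows "dens r F (s ` K) \<le> dens r F (r ` K) + real (card (setmul r s mul K F - F)) / real (card F)"
proof -
  have "real (card {\<gamma>\<in>F. r \<gamma> \<in> s ` K}) \<le> real (card {\<eta>\<in>F. r \<eta> \<in> r ` K}) + real (card (setmul r s mul K F - F))"
    using count_ineq[OF K F] by linarith
  then have "real (card {\<gamma>\<in>F. r \<gamma> \<in> s ` K}) / real (card F) \<le> (real (card {\<eta>\<in>F. r \<eta> \<in> r ` K}) + real (card (setmul r s mul K F - F))) / real (card F)"
    by (rule divide_right_mono) simp
  then show ?thesis unfolding dens_card[OF F] add_divide_distrib .
qed

end



definition fipinf :: "nat set set \<Rightarrow> bool" where
  "fipinf FF \<longleftrightarrow> (\<forall>G. G \<subseteq> FF \<longrightarrow> finite G \<longrightarrow> infinite (\<Inter>G))"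

definition Cof :: "nat set set" where "Cof = {X. finite (- X)}"

lemma fipinf_Cof: "fipinf Cof"
  unfolding fipinf_def
proof (intro allI impI)
  fix G assume "G \<subseteq> Cof" "finite G"
  have "G \<subseteq> Cof \<Longrightarrow> finite (- \<Inter>G)" using \<open>finite G\<close>
  proof (induct G rule: finite_induct)
    case (insert x G)
    then have "finite (- x)" "finite (- \<Inter>G)" by (auto simp: Cof_def)
    moreover have "- \<Inter>(insert x G) = - x \<union> - \<Inter>G" by auto
    ultimately show ?case by simp
  qed simp
  then have "finite (- \<Inter>G)" using \<open>G \<subseteq> Cof\<close> by blast
  show "infinite (\<Inter>G)"
  proof
    assume "finite (\<Inter>G)"
    with \<open>finite (- \<Inter>G)\<close> have "finite (\<Inter>G \<union> - \<Inter>G)" by simp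
    then show False by simp
  qed
qed

lemma chain_finite_sub:
  assumes C: "C \<in> chains AA" and G: "finite G"
  shows "G \<subseteq> Cof \<union> \<Union>C \<Longrightarrow> G \<subseteq> Cof \<or> (\<exists>F\<in>C. G \<subseteq> Cof \<union> F)"
  using G
proof (induct G rule: finite_induct)
  case empty then show ?case by simp
next
  case (insert x G)
  then have IH: "G \<subseteq> Cof \<or> (\<exists>F\<in>C. G \<subseteq> Cof \<union> F)" by auto
  from insert.prems have "x \<in> Cof \<or> (\<exists>F\<in>C. x \<in> F)" by auto
  moreover have ch: "\<forall>A\<in>C. \<forall>B\<in>C. A \<subseteq> B \<or> B \<subseteq> A"
    using C unfolding chains_def chain_subset_def by auto
  ultimately show ?case
  proof (elim disjE bexE)
    assume "x \<in> Cof" then show ?case using IH by blast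
  next
    fix F1 assume F1: "F1 \<in> C" "x \<in> F1"
    show ?case using IH
    proof (elim disjE bexE)
      assume "G \<subseteq> Cof" then show ?case using F1 by blast
    next
      fix F2 assume F2: "F2 \<in> C" "G \<subseteq> Cof \<union> F2"
      from ch F1(1) F2(1) have "F1 \<subseteq> F2 \<or> F2 \<subseteq> F1" by blast
      then show ?case
      proof
        assume "F1 \<subseteq> F2" then show ?case using F1 F2 by blast
      next
        assume "F2 \<subseteq> F1" then show ?case using F1 F2 by blast
      qed
    qed
  qed
qed

lemma ultra_exists:
  "\<exists>UU :: nat filter. UU \<noteq> bot \<and> UU \<le> sequentially \<and> (\<forall>P. eventually P UU \<or> eventually (\<lambda>x. \<not> P x) UU)"
proof -
  define AA where "AA = {FF. fipinf (Cof \<union> FF)}"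
  have "\<forall>C\<in>chains AA. \<Union>C \<in> AA"
  proof
    fix C assume C: "C \<in> chains AA"
    have sub: "C \<subseteq> AA" using C by (simp add: chains_def)
    show "\<Union>C \<in> AA" unfolding AA_def fipinf_def
    proof (intro CollectI allI impI)
      fix G assume G: "G \<subseteq> Cof \<union> \<Union>C" "finite G"
      from chain_finite_sub[OF C G(2) G(1)] show "infinite (\<Inter>G)"
      proof
        assume "G \<subseteq> Cof" then show ?thesis using fipinf_Cof G(2) by (auto simp: fipinf_def)
      next
        assume "\<exists>F\<in>C. G \<subseteq> Cof \<union> F"
        then obtain F where "F \<in> C" "G \<subseteq> Cof \<union> F" by blast
        moreover have "fipinf (Cof \<union> F)" using sub \<open>F \<in> C\<close> by (auto simp: AA_def)
        ultimately show ?thesis using G(2) by (auto simp: fipinf_def)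
      qed
    qed
  qed
  from Zorn_Lemma[OF this] obtain M where M: "M \<in> AA" and max: "\<And>X. X \<in> AA \<Longrightarrow> M \<subseteq> X \<Longrightarrow> X = M"
    by blast
  define FF where "FF = Cof \<union> M"
  have fM: "fipinf FF" using M by (simp add: AA_def FF_def)
  have addM: "Y \<in> FF" if "fipinf (FF \<union> {Y})" for Y
  proof -
    have "M \<union> {Y} \<in> AA" using that by (simp add: AA_def FF_def Un_assoc)
    from max[OF this] have "M \<union> {Y} = M" by auto
    thus ?thesis by (auto simp: FF_def)
  qed
  have up: "Y \<in> FF" if X: "X \<in> FF" and XY: "X \<subseteq> Y" for X Y
  proof (rule addM)
    show "fipinf (FF \<union> {Y})" unfolding fipinf_def
    proof (intro allI impI)
      fix G assume G: "G \<subseteq> FF \<union> {Y}" "finite G"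
      let ?G = "insert X (G - {Y})"
      have "?G \<subseteq> FF" "finite ?G" using G X by auto
      then have "infinite (\<Inter>?G)" using fM unfolding fipinf_def by blast
      moreover have "\<Inter>?G \<subseteq> \<Inter>G" using XY by auto
      ultimately show "infinite (\<Inter>G)" using finite_subset by blast
    qed
  qed
  have int: "X \<inter> Y \<in> FF" if X: "X \<in> FF" and Y: "Y \<in> FF" for X Y
  proof (rule addM)
    show "fipinf (FF \<union> {X \<inter> Y})" unfolding fipinf_def
    proof (intro allI impI)
      fix G assume G: "G \<subseteq> FF \<union> {X \<inter> Y}" "finite G"
      let ?G = "insert X (insert Y (G - {X \<inter> Y}))"
      have "?G \<subseteq> FF" "finite ?G" using G X Y by auto
      then have "infinite (\<Inter>?G)" using fM unfolding fipinf_def by blast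
      moreover have "\<Inter>?G \<subseteq> \<Inter>G" by auto
      ultimately show "infinite (\<Inter>G)" using finite_subset by blast
    qed
  qed
  have empty: "{} \<notin> FF"
  proof
    assume "{} \<in> FF"
    then have "{{}} \<subseteq> FF" by simp
    from fM[unfolded fipinf_def, rule_format, OF this] show False by simp
  qed
  have UNIVF: "UNIV \<in> FF" by (simp add: FF_def Cof_def)
  have ultra: "X \<in> FF \<or> - X \<in> FF" for X
  proof (rule ccontr)
    assume nn: "\<not> (X \<in> FF \<or> - X \<in> FF)"
    have bad: "\<exists>G. G \<subseteq> FF \<union> {Z} \<and> finite G \<and> finite (\<Inter>G)" if "Z \<notin> FF" for Z
    proof -
      have "\<not> fipinf (FF \<union> {Z})" using addM that by blast
      thus ?thesis unfolding fipinf_def by auto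
    qed
    obtain G1 where G1: "G1 \<subseteq> FF \<union> {X}" "finite G1" "finite (\<Inter>G1)" using bad nn by blast
    obtain G2 where G2: "G2 \<subseteq> FF \<union> {- X}" "finite G2" "finite (\<Inter>G2)" using bad nn by blast
    let ?G = "(G1 - {X}) \<union> (G2 - {- X})"
    have "?G \<subseteq> FF" "finite ?G" using G1 G2 by auto
    then have "infinite (\<Inter>?G)" using fM unfolding fipinf_def by blast
    moreover have "\<Inter>?G \<subseteq> \<Inter>G1 \<union> \<Inter>G2" by auto
    ultimately show False using G1 G2 by (meson finite_UnI finite_subset)
  qed
  define UU where "UU = Abs_filter (\<lambda>P. {x. P x} \<in> FF)"
  have isf: "is_filter (\<lambda>P. {x. P x} \<in> FF)"
  proof
    show "{x. True} \<in> FF" using UNIVF by simp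
  next
    fix P Q assume "{x. P x} \<in> FF" "{x. Q x} \<in> FF"
    from int[OF this] show "{x. P x \<and> Q x} \<in> FF" by (simp add: Collect_conj_eq)
  next
    fix P Q assume "\<forall>x. P x \<longrightarrow> Q x" "{x. P x} \<in> FF"
    then show "{x. Q x} \<in> FF" using up by (metis mem_Collect_eq subsetI)
  qed
  have ev: "eventually P UU \<longleftrightarrow> {x. P x} \<in> FF" for P
    unfolding UU_def using eventually_Abs_filter[OF isf] .
  have "UU \<noteq> bot" using empty by (simp add: trivial_limit_def ev)
  moreover have "UU \<le> sequentially"
  proof (rule filter_leI)
    fix P assume "eventually P sequentially"
    then obtain N where "\<forall>n\<ge>N. P n" by (auto simp: eventually_sequentially)
    then have "- {x. P x} \<subseteq> {..<N}" by (auto simp: not_less[symmetric])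
    then have "{x. P x} \<in> Cof" unfolding Cof_def using finite_subset[OF _ finite_lessThan] by blast
    then show "eventually P UU" by (simp add: ev FF_def)
  qed
  moreover have "\<forall>P. eventually P UU \<or> eventually (\<lambda>x. \<not> P x) UU"
    using ultra by (simp add: ev Collect_neg_eq)
  ultimately show ?thesis by blast
qed

lemma ultra_lim:
  fixes f :: "nat \<Rightarrow> real"
  assumes nb: "UU \<noteq> bot" and ul: "\<forall>P. eventually P UU \<or> eventually (\<lambda>x. \<not> P x) UU"
    and fK: "\<forall>k. f k \<in> K" and K: "compact K"
  shows "\<exists>L\<in>K. (f \<longlongrightarrow> L) UU"
proof -
  let ?F = "filtermap f UU"
  have "?F \<noteq> bot" using nb by (simp add: filtermap_bot_iff)
  moreover have "eventually (\<lambda>x. x \<in> K) ?F" using fK by (simp add: eventually_filtermap)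
  ultimately obtain x where x: "x \<in> K" "inf (nhds x) ?F \<noteq> bot"
    using K unfolding compact_filter by blast
  have "(f \<longlongrightarrow> x) UU"
  proof (rule topological_tendstoI)
    fix S assume S: "open S" "x \<in> S"
    show "eventually (\<lambda>k. f k \<in> S) UU"
    proof (rule ccontr)
      assume "\<not> eventually (\<lambda>k. f k \<in> S) UU"
      then have "eventually (\<lambda>k. f k \<notin> S) UU" using ul by blast
      then have e1: "eventually (\<lambda>y. y \<notin> S) ?F" by (simp add: eventually_filtermap)
      have e2: "eventually (\<lambda>y. y \<in> S) (nhds x)" using S by (rule eventually_nhds_in_open)
      have "eventually (\<lambda>_. False) (inf (nhds x) ?F)"
        unfolding eventually_inf using e1 e2 by blast
      then show False using x(2) by (simp add: trivial_limit_def)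
    qed
  qed
  then show ?thesis using x by blast
qed




locale agm = ag r s iv mul U for r s iv :: "'g::t2_space \<Rightarrow> 'g" and mul and U +
  fixes mu :: "'g set \<Rightarrow> real"
  assumes mu_nn: "mu X \<ge> 0" and mu_U: "mu U = 1"
    and mu_add: "X \<inter> Y = {} \<Longrightarrow> mu (X \<union> Y) = mu X + mu Y"
    and mu_inv: "compact B \<Longrightarrow> open B \<Longrightarrow> bisection r s B \<Longrightarrow> mu (s ` B) = mu (r ` B)"
begin

lemma mu_mono: "X \<subseteq> Y \<Longrightarrow> mu X \<le> mu Y"
proof -
  assume "X \<subseteq> Y"
  then have "Y = X \<union> (Y - X)" by auto
  then have "mu Y = mu X + mu (Y - X)" using mu_add[of X "Y - X"] by auto
  then show ?thesis using mu_nn[of "Y - X"] by linarith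
qed

lemma mu_sub: "mu (X \<union> Y) \<le> mu X + mu Y"
proof -
  have "X \<union> Y = X \<union> (Y - X)" by auto
  then have "mu (X \<union> Y) = mu X + mu (Y - X)" using mu_add[of X "Y - X"] by auto
  then show ?thesis using mu_mono[of "Y - X" Y] by auto
qed

definition "cosub W = {C. compact C \<and> open C \<and> C \<subseteq> W}"

definition lam :: "'g set \<Rightarrow> ennreal" where
  "lam W = (SUP C\<in>cosub W. ennreal (mu C))"

definition ost :: "'g set \<Rightarrow> ennreal" where
  "ost X = (INF W\<in>{W. open W \<and> X \<subseteq> W \<and> W \<subseteq> U}. lam W)"

lemma empty_cosub[simp]: "{} \<in> cosub W" by (simp add: cosub_def)

lemma lam_upper: "compact C \<Longrightarrow> open C \<Longrightarrow> C \<subseteq> W \<Longrightarrow> ennreal (mu C) \<le> lam W"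
  unfolding lam_def by (rule SUP_upper) (simp add: cosub_def)

lemma lam_mono: "W1 \<subseteq> W2 \<Longrightarrow> lam W1 \<le> lam W2"
  unfolding lam_def by (rule SUP_subset_mono) (auto simp: cosub_def)

lemma lam_le1: "W \<subseteq> U \<Longrightarrow> lam W \<le> 1"
  unfolding lam_def
proof (rule SUP_least)
  fix C assume "W \<subseteq> U" "C \<in> cosub W"
  then have "mu C \<le> 1" using mu_mono[of C U] mu_U by (auto simp: cosub_def)
  then show "ennreal (mu C) \<le> 1" by simp
qed

lemma mu_empty: "mu {} = 0" using mu_add[of "{}" "{}"] by simp

lemma lam_co: "compact C \<Longrightarrow> open C \<Longrightarrow> lam C = ennreal (mu C)"
proof (rule antisym)
  show "lam C \<le> ennreal (mu C)" unfolding lam_def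
    by (rule SUP_least) (auto simp: cosub_def intro!: ennreal_leI mu_mono)
  show "compact C \<Longrightarrow> open C \<Longrightarrow> ennreal (mu C) \<le> lam C" by (rule lam_upper) auto
qed

lemma lam_empty: "lam {} = 0"
proof -
  have "cosub ({}::'g set) = {{}}" by (auto simp: cosub_def)
  then show ?thesis unfolding lam_def by (simp add: mu_empty)
qed

lemma lam_split:
  assumes C: "compact C" "open C" "C \<subseteq> W"
  shows "ennreal (mu C) + lam (W - C) \<le> lam W"
proof -
  have "ennreal (mu C) + lam (W - C) = (SUP D\<in>cosub (W - C). ennreal (mu C) + ennreal (mu D))"
    unfolding lam_def by (rule ennreal_SUP_add_right) (use empty_cosub in blast)
  also have "\<dots> \<le> lam W"
  proof (rule SUP_least)
    fix D assume D: "D \<in> cosub (W - C)"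
    then have "C \<inter> D = {}" by (auto simp: cosub_def)
    then have "ennreal (mu C) + ennreal (mu D) = ennreal (mu (C \<union> D))"
      using mu_add[of C D] by (simp add: mu_nn)
    also have "\<dots> \<le> lam W" using D C by (intro lam_upper) (auto simp: cosub_def)
    finally show "ennreal (mu C) + ennreal (mu D) \<le> lam W" .
  qed
  finally show ?thesis .
qed

lemma lam_union2:
  assumes W1: "open W1" and W2: "open W2"
  shows "lam (W1 \<union> W2) \<le> lam W1 + lam W2"
  unfolding lam_def[of "W1 \<union> W2"]
proof (rule SUP_least)
  fix C assume "C \<in> cosub (W1 \<union> W2)"
  then have C: "compact C" "open C" "C \<subseteq> W1 \<union> W2" by (auto simp: cosub_def)
  have "compact (C - W2)" using C(1) W2 by (simp add: Diff_eq compact_Int_closed closed_Compl)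
  then obtain C1 where C1: "compact C1" "open C1" "C - W2 \<subseteq> C1" "C1 \<subseteq> W1"
    using compact_open_between[OF _ W1, of "C - W2"] C by blast
  have c2: "compact (C - C1)" using C(1) C1(2) by (simp add: Diff_eq compact_Int_closed closed_Compl)
  have o2: "open (C - C1)" using C(2) C1(1) by (simp add: open_Diff compact_imp_closed)
  have s2: "C - C1 \<subseteq> W2" using C1(3) by auto
  have "mu C \<le> mu (C1 \<union> (C - C1))" by (rule mu_mono) auto
  also have "\<dots> \<le> mu C1 + mu (C - C1)" by (rule mu_sub)
  finally have "ennreal (mu C) \<le> ennreal (mu C1 + mu (C - C1))" by (rule ennreal_leI)
  then have "ennreal (mu C) \<le> ennreal (mu C1) + ennreal (mu (C - C1))"
    by (simp add: mu_nn)
  also have "\<dots> \<le> lam W1 + lam W2"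
    using C1 c2 o2 s2 by (intro add_mono lam_upper) auto
  finally show "ennreal (mu C) \<le> lam W1 + lam W2" .
qed

lemma lam_union_fin:
  fixes W :: "nat \<Rightarrow> 'g set"
  assumes "\<And>i. open (W i)"
  shows "lam (\<Union>i<N. W i) \<le> (\<Sum>i<N. lam (W i))"
proof (induct N)
  case 0 then show ?case by (simp add: lam_empty)
next
  case (Suc N)
  have "(\<Union>i<Suc N. W i) = (\<Union>i<N. W i) \<union> W N" by (auto simp: lessThan_Suc)
  moreover have "open (\<Union>i<N. W i)" using assms by (intro open_UN) auto
  ultimately have "lam (\<Union>i<Suc N. W i) \<le> lam (\<Union>i<N. W i) + lam (W N)"
    using lam_union2[of "\<Union>i<N. W i" "W N"] assms by simp
  also have "\<dots> \<le> (\<Sum>i<N. lam (W i)) + lam (W N)" using Suc by (simp add: add_right_mono)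
  finally show ?case by simp
qed

lemma lam_countable:
  assumes W: "\<And>i. open (W i)"
  shows "lam (\<Union>i. W i) \<le> (\<Sum>i. lam (W i))"
  unfolding lam_def[of "\<Union>i. W i"]
proof (rule SUP_least)
  fix C assume "C \<in> cosub (\<Union>i. W i)"
  then have C: "compact C" "open C" "C \<subseteq> (\<Union>i. W i)" by (auto simp: cosub_def)
  obtain D where D: "D \<subseteq> UNIV" "finite D" "C \<subseteq> (\<Union>i\<in>D. W i)"
    using compactE_image[OF C(1), of UNIV W] W C(3) by auto
  define N where "N = Suc (Max (insert 0 D))"
  have "C \<subseteq> (\<Union>i<N. W i)"
  proof
    fix x assume "x \<in> C"
    then obtain i where "i \<in> D" "x \<in> W i" using D by auto
    moreover have "i < N" using \<open>i \<in> D\<close> D(2) by (simp add: N_def le_imp_less_Suc)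
    ultimately show "x \<in> (\<Union>i<N. W i)" by auto
  qed
  then have "ennreal (mu C) \<le> lam (\<Union>i<N. W i)" using C by (intro lam_upper) auto
  also have "\<dots> \<le> (\<Sum>i<N. lam (W i))" using W by (rule lam_union_fin)
  also have "\<dots> \<le> (\<Sum>i. lam (W i))" by (rule sum_le_suminf) auto
  finally show "ennreal (mu C) \<le> (\<Sum>i. lam (W i))" .
qed

lemma ost_le: "X \<subseteq> W \<Longrightarrow> open W \<Longrightarrow> W \<subseteq> U \<Longrightarrow> ost X \<le> lam W"
  unfolding ost_def by (rule INF_lower) auto

lemma ost_open: "open W \<Longrightarrow> W \<subseteq> U \<Longrightarrow> ost W = lam W"
  apply (rule antisym)
   apply (rule ost_le, auto)
  apply (unfold ost_def, rule INF_greatest, auto intro: lam_mono)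
  done

lemma ost_mono: "X \<subseteq> Y \<Longrightarrow> ost X \<le> ost Y"
  unfolding ost_def by (rule INF_superset_mono) auto

lemma ost_empty: "ost {} = 0"
proof -
  have "ost {} \<le> lam {}" by (rule ost_le) auto
  also have "lam {} = 0" by (rule lam_empty)
  finally show ?thesis by simp
qed

lemma ost_le1: "X \<subseteq> U \<Longrightarrow> ost X \<le> 1"
  using ost_le[of X U] openU lam_le1[of U] by auto

lemma ost_countable:
  assumes A: "\<And>i. A i \<subseteq> U"
  shows "ost (\<Union>i. A i) \<le> (\<Sum>i. ost (A i))"
proof (rule ennreal_le_epsilon)
  fix e :: real assume e: "0 < e"
  define d where "d i = e * (1/2) ^ Suc i" for i
  have dpos: "d i > 0" for i using e by (simp add: d_def)
  have "\<exists>W. open W \<and> A i \<subseteq> W \<and> W \<subseteq> U \<and> lam W < ost (A i) + ennreal (d i)" for i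
  proof -
    have fin: "ost (A i) < \<top>" using ost_le1[OF A] by (metis ennreal_one_less_top le_less_trans)
    have "ost (A i) < ost (A i) + ennreal (d i)"
      using fin dpos[of i] by simp
    then show ?thesis unfolding ost_def[of "A i"] INF_less_iff by auto
  qed
  then obtain W where W: "\<And>i. open (W i) \<and> A i \<subseteq> W i \<and> W i \<subseteq> U \<and> lam (W i) < ost (A i) + ennreal (d i)"
    by metis
  have "ost (\<Union>i. A i) \<le> lam (\<Union>i. W i)" using W by (intro ost_le) auto
  also have "\<dots> \<le> (\<Sum>i. lam (W i))" using W by (intro lam_countable) auto
  also have "\<dots> \<le> (\<Sum>i. ost (A i) + ennreal (d i))"
    using W by (intro suminf_le) (auto intro: less_imp_le)
  also have "\<dots> = (\<Sum>i. ost (A i)) + (\<Sum>i. ennreal (d i))" by (rule suminf_add[symmetric]) auto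
  also have "(\<Sum>i. ennreal (d i)) = ennreal e"
  proof -
    have "d sums (e * 1)" unfolding d_def by (intro sums_mult power_half_series)
    then show ?thesis using dpos by (subst suminf_ennreal2) (auto simp: sums_iff less_imp_le)
  qed
  finally show "ost (\<Union>i. A i) \<le> (\<Sum>i. ost (A i)) + ennreal e" .
qed

lemma ost_open_split:
  assumes O: "open W0" "W0 \<subseteq> U" and X: "X \<subseteq> U"
  shows "ost (X \<inter> W0) + ost (X - W0) \<le> ost X"
  unfolding ost_def[of X]
proof (rule INF_greatest)
  fix W assume "W \<in> {W. open W \<and> X \<subseteq> W \<and> W \<subseteq> U}"
  then have W: "open W" "X \<subseteq> W" "W \<subseteq> U" by auto
  have "lam (W \<inter> W0) + ost (X - W0) = (SUP C\<in>cosub (W \<inter> W0). ennreal (mu C) + ost (X - W0))"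
    unfolding lam_def by (rule ennreal_SUP_add_left[symmetric]) (use empty_cosub in blast)
  also have "\<dots> \<le> lam W"
  proof (rule SUP_least)
    fix C assume "C \<in> cosub (W \<inter> W0)"
    then have C: "compact C" "open C" "C \<subseteq> W \<inter> W0" by (auto simp: cosub_def)
    have "ost (X - W0) \<le> lam (W - C)"
      using C W by (intro ost_le) (auto simp: open_Diff compact_imp_closed)
    then have "ennreal (mu C) + ost (X - W0) \<le> ennreal (mu C) + lam (W - C)" by (rule add_left_mono)
    also have "\<dots> \<le> lam W" using C by (intro lam_split) auto
    finally show "ennreal (mu C) + ost (X - W0) \<le> lam W" .
  qed
  finally have "lam (W \<inter> W0) + ost (X - W0) \<le> lam W" .
  moreover have "ost (X \<inter> W0) \<le> lam (W \<inter> W0)" using W O by (intro ost_le) auto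
  ultimately show "ost (X \<inter> W0) + ost (X - W0) \<le> lam W"
    by (meson add_right_mono order_trans)
qed

end



context agm begin

lemma oms: "outer_measure_space (Pow U) ost"
  unfolding outer_measure_space_def
proof (intro conjI)
  show "positive (Pow U) ost" by (simp add: positive_def ost_empty)
  show "increasing (Pow U) ost" by (simp add: increasing_def ost_mono)
  show "countably_subadditive (Pow U) ost"
    unfolding countably_subadditive_def
    by (intro allI impI ost_countable) auto
qed

definition "LS = lambda_system U (Pow U) ost"

lemma ms: "measure_space U LS ost"
  unfolding LS_def by (rule sigma_algebra.caratheodory_lemma[OF sigma_algebra_Pow oms])

lemma sigLS: "sigma_algebra U LS" using ms by (simp add: measure_space_def)

lemma open_LS:
  assumes W0: "open W0" "W0 \<subseteq> U" shows "W0 \<in> LS"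
proof -
  interpret P: sigma_algebra U "Pow U" by (rule sigma_algebra_Pow)
  have sa: "subadditive (Pow U) ost"
    using oms unfolding outer_measure_space_def by (intro P.countably_subadditive_subadditive) auto
  have "ost (W0 \<inter> x) + ost ((U - W0) \<inter> x) = ost x" if x: "x \<subseteq> U" for x
  proof -
    have e1: "W0 \<inter> x = x \<inter> W0" and e2: "(U - W0) \<inter> x = x - W0" using x by auto
    have "ost x = ost ((x \<inter> W0) \<union> (x - W0))" by (metis Un_Diff_Int sup_commute)
    also have "\<dots> \<le> ost (x \<inter> W0) + ost (x - W0)"
      using sa x unfolding subadditive_def by (metis Diff_disjoint Int_Diff Int_lower1 PowI inf_commute order_trans Diff_subset)
    finally have "ost x \<le> ost (x \<inter> W0) + ost (x - W0)" .
    moreover have "ost (x \<inter> W0) + ost (x - W0) \<le> ost x" using ost_open_split[OF W0 x] .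
    ultimately show ?thesis unfolding e1 e2 by simp
  qed
  then show ?thesis using W0 by (auto simp: LS_def lambda_system_def)
qed

lemma borel_LS:
  assumes "B \<in> sets borel" shows "B \<inter> U \<in> LS"
proof -
  interpret L: sigma_algebra U LS by (rule sigLS)
  have "B \<in> sigma_sets UNIV {S. open S}" using assms by (simp add: sets_borel)
  then show ?thesis
  proof (induct rule: sigma_sets.induct)
    case (Basic a) then show ?case using openU by (intro open_LS) auto
  next
    case Empty then show ?case by simp
  next
    case (Compl a)
    have "(UNIV - a) \<inter> U = U - (a \<inter> U)" by auto
    then show ?case using Compl by (simp add: L.compl_sets)
  next
    case (Union a)
    have "(\<Union>i. a i) \<inter> U = (\<Union>i. a i \<inter> U)" by auto
    show ?case unfolding \<open>(\<Union>i. a i) \<inter> U = (\<Union>i. a i \<inter> U)\<close>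
      using Union by (intro L.countable_UN) auto
  qed
qed

definition "NN = sets (restrict_space borel U)"

lemma NN_eq: "NN = (\<inter>) U ` sets borel" by (simp add: NN_def sets_restrict_space)

lemma NN_LS: "NN \<subseteq> LS" using borel_LS by (auto simp: NN_eq Int_commute)

lemma sigNN: "sigma_algebra U NN"
proof -
  have "sigma_algebra (space (restrict_space borel U)) (sets (restrict_space borel U))"
    by (rule sets.sigma_algebra_axioms)
  then show ?thesis by (simp add: NN_def space_restrict_space)
qed

definition "nu = measure_of U NN ost"

lemma sets_nu: "sets nu = NN" unfolding nu_def by (rule sigma_algebra.sets_measure_of_eq[OF sigNN])

lemma space_nu: "space nu = U"
  unfolding nu_def using sigNN by (simp add: sigma_algebra_def algebra_def subset_class_def space_measure_of_conv)

lemma emeasure_nu: "X \<in> NN \<Longrightarrow> emeasure nu X = ost X"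
  unfolding nu_def
proof (rule emeasure_measure_of_sigma[OF sigNN])
  show "positive NN ost" by (simp add: positive_def ost_empty)
  have "countably_additive LS ost" using ms by (simp add: measure_space_def)
  then show "countably_additive NN ost" using NN_LS unfolding countably_additive_def by blast
qed

lemma open_NN: "open W0 \<Longrightarrow> W0 \<subseteq> U \<Longrightarrow> W0 \<in> NN"
  unfolding NN_eq by (rule image_eqI[of _ _ W0]) auto

lemma emeasure_nu_open: "open W0 \<Longrightarrow> W0 \<subseteq> U \<Longrightarrow> emeasure nu W0 = lam W0"
  using emeasure_nu[OF open_NN] ost_open by simp

lemma lam_inv_le:
  assumes B: "open B" "bisection r s B" shows "lam (s ` B) \<le> lam (r ` B)"
  unfolding lam_def[of "s ` B"]
proof (rule SUP_least)
  fix C assume "C \<in> cosub (s ` B)"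
  then have C: "compact C" "open C" "C \<subseteq> s ` B" by (auto simp: cosub_def)
  have injs: "inj_on s B" using B(2) by (simp add: bisection_def)
  define g where "g = the_inv_into B s"
  have gs: "\<And>x. x \<in> B \<Longrightarrow> g (s x) = x" unfolding g_def by (rule the_inv_into_f_f[OF injs])
  have contg: "continuous_on (s ` B) g"
  proof (rule continuous_on_inverse_open_map[where f=s and S=B])
    show "continuous_on B s" by (rule continuous_on_subset[OF cont_s]) simp
    show "s ` B = s ` B" ..
    show "\<And>x. x \<in> B \<Longrightarrow> g (s x) = x" by (rule gs)
  next
    fix V assume V: "openin (top_of_set B) V"
    then have "open V" using B(1) by (rule openin_open_trans)
    then have "open (s ` V)" by (rule open_s)
    moreover have "s ` V \<subseteq> s ` B" using openin_imp_subset[OF V] by auto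
    ultimately show "openin (top_of_set (s ` B)) (s ` V)" unfolding openin_open
      by (intro exI[of _ "s ` V"]) auto
  qed
  define BC where "BC = B \<inter> s -` C"
  have BC_eq: "BC = g ` C"
  proof
    show "BC \<subseteq> g ` C"
    proof
      fix b assume "b \<in> BC"
      then have "b \<in> B" "s b \<in> C" by (auto simp: BC_def)
      then show "b \<in> g ` C" using gs by (metis image_eqI)
    qed
    show "g ` C \<subseteq> BC"
    proof
      fix x assume "x \<in> g ` C"
      then obtain c where c: "c \<in> C" "x = g c" by auto
      then obtain b where "b \<in> B" "c = s b" using C(3) by auto
      then show "x \<in> BC" using c gs by (auto simp: BC_def)
    qed
  qed
  have cBC: "compact BC" unfolding BC_eq
    by (rule compact_continuous_image[OF continuous_on_subset[OF contg C(3)] C(1)])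
  have "open (s -` C)" using cont_s C(2) by (simp add: continuous_on_open_vimage[OF open_UNIV])
  then have oBC: "open BC" unfolding BC_def using B(1) by (rule open_Int[rotated])
  have bBC: "bisection r s BC" using B(2) unfolding bisection_def BC_def by (auto intro: inj_on_subset)
  have sBC: "s ` BC = C" using C(3) by (auto simp: BC_def)
  have "mu C = mu (r ` BC)" using mu_inv[OF cBC oBC bBC] sBC by simp
  moreover have "ennreal (mu (r ` BC)) \<le> lam (r ` B)"
  proof (rule lam_upper)
    show "compact (r ` BC)" by (rule compact_continuous_image[OF continuous_on_subset[OF cont_r] cBC]) simp
    show "open (r ` BC)" using oBC by (rule open_r)
    show "r ` BC \<subseteq> r ` B" by (auto simp: BC_def)
  qed
  ultimately show "ennreal (mu C) \<le> lam (r ` B)" by simp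
qed

lemma nu_invariant: "nu \<in> invariant_measures r s U"
  unfolding invariant_measures_def
proof (intro CollectI conjI allI impI)
  have "emeasure nu (space nu) = 1"
    using emeasure_nu_open[OF openU subset_refl] lam_co[OF cptU openU] mu_U by (simp add: space_nu)
  then show "prob_space nu" by (rule prob_spaceI)
  show "sets nu = sets (restrict_space borel U)" by (simp add: sets_nu NN_def)
  fix B assume B: "open B \<and> bisection r s B"
  have sub: "s ` B \<subseteq> U" "r ` B \<subseteq> U" by auto
  have "lam (s ` B) = lam (r ` B)"
  proof (rule antisym)
    show "lam (s ` B) \<le> lam (r ` B)" using B by (intro lam_inv_le) auto
    have "lam (s ` iv ` B) \<le> lam (r ` iv ` B)" using B by (intro lam_inv_le open_iv bisection_iv) auto
    then show "lam (r ` B) \<le> lam (s ` B)" by (simp add: r_iv_image s_iv_image)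
  qed
  then show "emeasure nu (s ` B) = emeasure nu (r ` B)"
    using B sub by (simp add: emeasure_nu_open open_s open_r)
qed

lemma measure_nu_co: "compact A \<Longrightarrow> open A \<Longrightarrow> A \<subseteq> U \<Longrightarrow> measure nu A = mu A"
  unfolding measure_def using emeasure_nu_open lam_co mu_nn by simp

end



context ag begin

lemma dens_props:
  assumes F: "finite F" "F \<noteq> {}"
  shows "0 \<le> dens r F X" "dens r F X \<le> 1" "dens r F U = 1"
    "X \<inter> Y = {} \<Longrightarrow> dens r F (X \<union> Y) = dens r F X + dens r F Y"
proof -
  have cF: "0 < card F" using F by (simp add: card_gt_0_iff)
  show "0 \<le> dens r F X" unfolding dens_def by (intro mult_nonneg_nonneg sum_nonneg) auto
  have "card {\<gamma>\<in>F. r \<gamma> \<in> X} \<le> card F" using F(1) by (intro card_mono) auto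
  then show "dens r F X \<le> 1" unfolding dens_card[OF F(1)] using cF by simp
  have "{\<gamma>\<in>F. r \<gamma> \<in> U} = F" by auto
  then show "dens r F U = 1" unfolding dens_card[OF F(1)] using cF by simp
  assume XY: "X \<inter> Y = {}"
  have "indicator (X \<union> Y) (r \<gamma>) = (indicator X (r \<gamma>) + indicator Y (r \<gamma>) :: real)" for \<gamma>
    using XY by (auto simp: indicator_def)
  then show "dens r F (X \<union> Y) = dens r F X + dens r F Y"
    unfolding dens_def by (simp add: sum.distrib distrib_left)
qed

end

theorem mainTheorem13:
  fixes r s iv :: "'g::t2_space \<Rightarrow> 'g" and mul :: "'g \<Rightarrow> 'g \<Rightarrow> 'g"
    and U :: "'g set" and S :: "nat \<Rightarrow> 'g set" and A :: "'g set"
  assumes "ample_groupoid r s mul iv U"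
    and "foelner_seq r s mul U S"
    and "A \<subseteq> U" and "compact A" and "open A"
  shows "\<exists>\<nu>\<in>invariant_measures r s U. upper_density r s U S A = ereal (measure \<nu> A)
           \<and> upper_density r s U S A \<le> (SUP \<mu>\<in>invariant_measures r s U. ereal (measure \<mu> A))"
proof -
  interpret ag r s iv mul U using assms(1) by (rule ag.intro)
  define Fb where "Fb n u = fibre s (S n) u" for n u
  have normal: "\<And>n. normal_set r s mul U (S n)" using assms(2) by (simp add: foelner_seq_def)
  have fin: "\<And>n u. u \<in> U \<Longrightarrow> finite (Fb n u)" and ne: "\<And>n u. u \<in> U \<Longrightarrow> Fb n u \<noteq> {}"
    using normal_fibre[OF normal] unfolding Fb_def by auto
  define w where "w n = (SUP u\<in>U. ereal (dens r (Fb n u) A))" for n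
  have ud: "upper_density r s U S A = limsup w"
    unfolding upper_density_def w_def Fb_def dens_def ..
  obtain u0 where u0: "u0 \<in> U" using rU by blast
  have w01: "0 \<le> w n \<and> w n \<le> 1" for n
  proof
    have "ereal 0 \<le> ereal (dens r (Fb n u0) A)" using dens_props(1)[OF fin[OF u0] ne[OF u0]] by simp
    also have "\<dots> \<le> w n" unfolding w_def using u0 by (rule SUP_upper)
    finally show "0 \<le> w n" by (simp add: zero_ereal_def)
    show "w n \<le> 1" unfolding w_def
      by (rule SUP_least) (use dens_props(2)[OF fin ne] in simp)
  qed
  obtain \<rho> where \<rho>: "strict_mono \<rho>" "(w \<circ> \<rho>) \<longlonglongrightarrow> limsup w" using limsup_subseq_lim by blast
  have L0: "0 \<le> limsup w" using w01 by (intro LIMSEQ_le_const[OF \<rho>(2)]) auto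
  have L1: "limsup w \<le> 1" using w01 by (intro LIMSEQ_le_const2[OF \<rho>(2)]) auto
  define Dr where "Dr = real_of_ereal (limsup w)"
  have LD: "limsup w = ereal Dr" using L0 L1 unfolding Dr_def by (cases "limsup w") auto
  define W where "W n = real_of_ereal (w n)" for n
  have wW: "w n = ereal (W n)" for n using w01[of n] unfolding W_def by (cases "w n") auto
  have Wlim: "(\<lambda>k. W (\<rho> k)) \<longlonglongrightarrow> Dr"
    using lim_real_of_ereal[OF \<rho>(2)[unfolded LD]] by (simp add: W_def o_def)
  have "\<exists>v\<in>U. W (\<rho> k) - inverse (real (Suc k)) < dens r (Fb (\<rho> k) v) A" for k
  proof -
    have "ereal (W (\<rho> k) - inverse (real (Suc k))) < w (\<rho> k)" unfolding wW by simp
    then show ?thesis unfolding w_def less_SUP_iff by auto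
  qed
  then obtain u where u: "\<And>k. u k \<in> U" "\<And>k. W (\<rho> k) - inverse (real (Suc k)) < dens r (Fb (\<rho> k) (u k)) A"
    by metis
  define d where "d k X = dens r (Fb (\<rho> k) (u k)) X" for k X
  have dle: "d k A \<le> W (\<rho> k)" for k
  proof -
    have "ereal (d k A) \<le> w (\<rho> k)" unfolding w_def d_def using u(1) by (rule SUP_upper)
    then show ?thesis unfolding wW by simp
  qed
  have dA: "(\<lambda>k. d k A) \<longlonglongrightarrow> Dr"
  proof (rule tendsto_sandwich[of "\<lambda>k. W (\<rho> k) - inverse (real (Suc k))" _ _ "\<lambda>k. W (\<rho> k)"])
    show "\<forall>\<^sub>F k in sequentially. W (\<rho> k) - inverse (real (Suc k)) \<le> d k A"
      using u(2) by (auto simp: d_def less_imp_le)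
    show "\<forall>\<^sub>F k in sequentially. d k A \<le> W (\<rho> k)" using dle by simp
    show "(\<lambda>k. W (\<rho> k) - inverse (real (Suc k))) \<longlonglongrightarrow> Dr"
      using tendsto_diff[OF Wlim LIMSEQ_inverse_real_of_nat] by simp
    show "(\<lambda>k. W (\<rho> k)) \<longlonglongrightarrow> Dr" by (rule Wlim)
  qed
  obtain UU :: "nat filter" where UU: "UU \<noteq> bot" "UU \<le> sequentially"
    "\<forall>P. eventually P UU \<or> eventually (\<lambda>x. \<not> P x) UU"
    using ultra_exists by blast
  have fk: "finite (Fb (\<rho> k) (u k))" "Fb (\<rho> k) (u k) \<noteq> {}" for k using fin ne u(1) by auto
  have d01: "d k X \<in> {0..1}" for k X using dens_props(1,2)[OF fk] by (simp add: d_def)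
  define mu where "mu X = Lim UU (\<lambda>k. d k X)" for X
  have mulim: "((\<lambda>k. d k X) \<longlongrightarrow> mu X) UU" for X
  proof -
    obtain L where "((\<lambda>k. d k X) \<longlongrightarrow> L) UU"
      using ultra_lim[OF UU(1) UU(3), of "\<lambda>k. d k X" "{0..1}"] d01 by auto
    moreover then have "mu X = L" unfolding mu_def by (rule tendsto_Lim[OF UU(1)])
    ultimately show ?thesis by simp
  qed
  have mu_nn: "0 \<le> mu X" for X
    by (rule tendsto_lowerbound[OF mulim _ UU(1)]) (use d01 in \<open>auto intro: always_eventually\<close>)
  have mu_U: "mu U = 1"
  proof -
    have "d k U = 1" for k using dens_props(3)[OF fk] by (simp add: d_def)
    then have "((\<lambda>k. d k U) \<longlongrightarrow> 1) UU" by simp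
    then show ?thesis using tendsto_unique[OF UU(1) mulim[of U]] by blast
  qed
  have mu_add: "mu (X \<union> Y) = mu X + mu Y" if XY: "X \<inter> Y = {}" for X Y
  proof -
    have "d k (X \<union> Y) = d k X + d k Y" for k using dens_props(4)[OF fk XY] by (simp add: d_def)
    then have "((\<lambda>k. d k (X \<union> Y)) \<longlongrightarrow> mu X + mu Y) UU"
      using tendsto_add[OF mulim[of X] mulim[of Y]] by simp
    then show ?thesis using tendsto_unique[OF UU(1) mulim[of "X \<union> Y"]] by blast
  qed
  have ratio_small: "eventually (\<lambda>k. real (card (setmul r s mul K (Fb (\<rho> k) (u k)) - Fb (\<rho> k) (u k)))
        / real (card (Fb (\<rho> k) (u k))) < e) UU" if K: "compact K" and e: "0 < e" for K e
  proof -
    define R where "R n v = real (card (setmul r s mul K (Fb n v) - Fb n v)) / real (card (Fb n v))" for n v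
    have "(\<lambda>n. SUP v\<in>U. ereal (R n v)) \<longlonglongrightarrow> 0"
      using assms(2) K unfolding foelner_seq_def R_def Fb_def by blast
    then have "eventually (\<lambda>n. (SUP v\<in>U. ereal (R n v)) < ereal e) sequentially"
      using e by (intro order_tendstoD(2)) auto
    then obtain N where N: "\<And>n. n \<ge> N \<Longrightarrow> (SUP v\<in>U. ereal (R n v)) < ereal e"
      by (auto simp: eventually_sequentially)
    have "R (\<rho> k) (u k) < e" if "k \<ge> N" for k
    proof -
      have "\<rho> k \<ge> N" using seq_suble[OF \<rho>(1), of k] that by simp
      have "ereal (R (\<rho> k) (u k)) \<le> (SUP v\<in>U. ereal (R (\<rho> k) v))" using u(1) by (rule SUP_upper)
      also have "\<dots> < ereal e" using N[OF \<open>\<rho> k \<ge> N\<close>] .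
      finally show ?thesis by simp
    qed
    then have "eventually (\<lambda>k. R (\<rho> k) (u k) < e) sequentially" by (auto simp: eventually_sequentially)
    then show ?thesis using filter_leD[OF UU(2)] unfolding R_def by blast
  qed
  have half_inv: "mu (s ` B) \<le> mu (r ` B)" if B: "compact B" "open B" "bisection r s B" for B
  proof (rule field_le_epsilon)
    fix e :: real assume e: "0 < e"
    have "eventually (\<lambda>k. d k (s ` B) \<le> d k (r ` B) + e) UU"
      using ratio_small[OF B(1) e]
    proof (rule eventually_mono)
      fix k assume "real (card (setmul r s mul B (Fb (\<rho> k) (u k)) - Fb (\<rho> k) (u k)))
        / real (card (Fb (\<rho> k) (u k))) < e"
      then show "d k (s ` B) \<le> d k (r ` B) + e"
        using dens_ineq[OF B(3) fk(1)[of k]] unfolding d_def by linarith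
    qed
    then show "mu (s ` B) \<le> mu (r ` B) + e"
      using tendsto_le[OF UU(1) tendsto_add[OF mulim[of "r ` B"] tendsto_const[of e]] mulim[of "s ` B"]]
      by blast
  qed
  have mu_inv: "mu (s ` B) = mu (r ` B)" if B: "compact B" "open B" "bisection r s B" for B
  proof (rule antisym)
    show "mu (s ` B) \<le> mu (r ` B)" using half_inv[OF B] .
    have "mu (s ` iv ` B) \<le> mu (r ` iv ` B)" using B by (intro half_inv compact_iv open_iv bisection_iv)
    then show "mu (r ` B) \<le> mu (s ` B)" by (simp add: r_iv_image s_iv_image)
  qed
  interpret M: agm r s iv mul U mu
  proof unfold_locales
    show "\<And>X. 0 \<le> mu X" by (rule mu_nn)
    show "mu U = 1" by (rule mu_U)
    show "\<And>X Y. X \<inter> Y = {} \<Longrightarrow> mu (X \<union> Y) = mu X + mu Y" by (rule mu_add)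
    show "\<And>B. compact B \<Longrightarrow> open B \<Longrightarrow> bisection r s B \<Longrightarrow> mu (s ` B) = mu (r ` B)" by (rule mu_inv)
  qed
  have mA: "measure M.nu A = mu A" using M.measure_nu_co assms(3-5) by simp
  have "mu A = Dr" using tendsto_unique[OF UU(1) mulim[of A] tendsto_mono[OF UU(2) dA]] .
  then have eq: "upper_density r s U S A = ereal (measure M.nu A)" using ud LD mA by simp
  have inv: "M.nu \<in> invariant_measures r s U" by (rule M.nu_invariant)
  show ?thesis
  proof (rule bexI[OF _ inv], rule conjI)
    show "upper_density r s U S A = ereal (measure M.nu A)" by (rule eq)
    show "upper_density r s U S A \<le> (SUP \<mu>\<in>invariant_measures r s U. ereal (measure \<mu> A))"
      unfolding eq using inv by (rule SUP_upper)
  qed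
qed



end
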